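(* Let $h>1$, $q=2^h$, and let $U$ be a nonempty subset of $\mathrm{GF}(q)^{\star}$. Then every non-degenerate conic of $PG(2,q^2)$ has at least one point in the set $\Psi'=\{P(x,y):\|x\|\in U\}\cup\{Y_\infty\}$, where $Y_\infty$ is the point at infinity of the vertical lines $X=c$; equivalently, the set of lines $\{X=c: c\in\mathrm{GF}(q^2),\ \|c\|\in U\}$ of $PG(2,q^2)$ is a conic blocking set.
   Context: $\|x\|=x^{q+1}$ for $x\in\mathrm{GF}(q^2)$. A conic blocking set of $PG(2,q^2)$ is a set of lines such that every non-degenerate conic meets at least one line of the set. *)

theory Defs
  imports Main
begin

definition gnorm :: "nat \<Rightarrow> 'a::field \<Rightarrow> 'a" where
  "gnorm q x = x ^ (q + 1)"

text \<open>The subfield GF(q) of GF(q^2), i.e. fixed points of Frobenius x |-> x^q,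
  and its multiplicative group GF(q)^*.\<close>
definition subfield_star :: "nat \<Rightarrow> 'a::field set" where
  "subfield_star q = {u. u \<noteq> 0 \<and> u ^ q = u}"

type_synonym 'a conic = "'a \<times> 'a \<times> 'a \<times> 'a \<times> 'a \<times> 'a"

fun conic_form :: "'a::field conic \<Rightarrow> 'a \<times> 'a \<times> 'a \<Rightarrow> 'a" where
  "conic_form (a, b, c, d, e, f) (X, Y, Z) =
     a*X^2 + b*Y^2 + c*Z^2 + d*X*Y + e*X*Z + f*Y*Z"

text \<open>Non-degeneracy: the (half-)discriminant
  4abc + def - af^2 - be^2 - cd^2 is nonzero (valid in every characteristic;
  in characteristic 2 it is af^2 + be^2 + cd^2 + def).\<close>
fun conic_nondeg :: "'a::field conic \<Rightarrow> bool" where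
  "conic_nondeg (a, b, c, d, e, f) =
     (4*a*b*c + d*e*f - a*f^2 - b*e^2 - c*d^2 \<noteq> 0)"

text \<open>Points of PG(2,F) are nonzero triples up to scalars; a point lies on a conic
  iff any (every) representative is a zero of the form.\<close>
definition on_conic :: "'a::field conic \<Rightarrow> 'a \<times> 'a \<times> 'a \<Rightarrow> bool" where
  "on_conic C p \<longleftrightarrow> p \<noteq> (0, 0, 0) \<and> conic_form C p = 0"

text \<open>Psi' = {P(x,y) : ||x|| in U} union {Y_infinity}, with P(x,y) = (x:y:1) and
  Y_infinity = (0:1:0), as representatives.\<close>
definition Psi' :: "nat \<Rightarrow> 'a::field set \<Rightarrow> ('a \<times> 'a \<times> 'a) set" where
  "Psi' q U = {(x, y, 1) | x y. gnorm q x \<in> U} \<union> {(0, 1, 0)}"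

end

theory Submission imports Defs "HOL-Number_Theory.Residues" "HOL-Computational_Algebra.Polynomial" begin

lemma char2:
  assumes "card (UNIV :: 'a::{field,finite} set) = 2 ^ n" "n > 0"
  shows "(2::'a) = 0"
proof -
  have pos: "CHAR('a) > 0" by (simp add: finite_imp_CHAR_pos)
  have pr: "prime CHAR('a)" using prime_CHAR_semidom[OF pos] .
  have "CHAR('a) dvd 2 ^ n" using CHAR_dvd_CARD[where 'a='a] assms(1) by simp
  hence d: "CHAR('a) dvd 2" using pr prime_dvd_power by blast
  have "CHAR('a) = 1 \<or> CHAR('a) = 2" using two_is_prime_nat d unfolding prime_nat_iff by blast
  hence "CHAR('a) = 2" using pr by auto
  thus ?thesis using of_nat_CHAR[where 'a='a] by simp
qed

lemma fermat:
  fixes x :: "'a::{field,finite}"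
  shows "x ^ card (UNIV :: 'a set) = x"
proof (cases "x = 0")
  case True thus ?thesis by (simp add: zero_power finite_UNIV_card_ge_0)
next
  case False
  let ?A = "UNIV - {0::'a}"
  have inj: "inj_on ((*) x) ?A" using False by (auto simp: inj_on_def)
  have img: "(*) x ` ?A = ?A"
  proof
    show "(*) x ` ?A \<subseteq> ?A" using False by auto
    show "?A \<subseteq> (*) x ` ?A"
    proof
      fix y assume "y \<in> ?A"
      hence "y = x * (y / x)" "y / x \<in> ?A" using False by auto
      thus "y \<in> (*) x ` ?A" by blast
    qed
  qed
  have "prod (\<lambda>y. y) ?A = prod (\<lambda>y. y) ((*) x ` ?A)" using img by simp
  also have "\<dots> = prod (\<lambda>y. x * y) ?A" using prod.reindex[OF inj] by simp
  also have "\<dots> = x ^ card ?A * prod (\<lambda>y. y) ?A" by (simp add: prod.distrib)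
  finally have "x ^ card ?A = 1" 
    by (metis (no_types, lifting) Diff_iff finite mult_cancel_right1 prod_zero_iff singletonI)
  moreover have "card ?A + 1 = card (UNIV::'a set)"
    by (simp add: card_Diff_singleton finite_UNIV_card_ge_0 Suc_leI)
  ultimately show ?thesis by (metis mult_1 power_Suc2 add.commute plus_1_eq_Suc)
qed

lemma roots_bound1:
  fixes c :: "'a::field"
  assumes "n \<ge> 1"
  shows "card {x. x ^ n = c} \<le> n"
proof -
  let ?p = "monom 1 n + [:-c:]"
  have "degree [:-c:] < degree (monom (1::'a) n)" using assms by (simp add: degree_monom_eq)
  hence dg: "degree ?p = n" using assms by (simp add: degree_add_eq_left degree_monom_eq)
  hence "?p \<noteq> 0" using assms by auto
  hence "card {x. poly ?p x = 0} \<le> degree ?p" by (rule card_poly_roots_bound)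
  moreover have "{x. poly ?p x = 0} = {x. x ^ n = c}" by (auto simp: poly_monom)
  ultimately show ?thesis using dg by simp
qed

lemma roots_bound2:
  fixes a b :: "'a::field"
  assumes "n \<ge> 2"
  shows "card {x. x ^ n + a * x = b} \<le> n"
proof -
  let ?p = "monom 1 n + [:-b, a:]"
  have "degree [:-b, a:] < degree (monom (1::'a) n)" using assms by (simp add: degree_monom_eq)
  hence dg: "degree ?p = n" using assms by (simp add: degree_add_eq_left degree_monom_eq)
  hence "?p \<noteq> 0" using assms by auto
  hence "card {x. poly ?p x = 0} \<le> degree ?p" by (rule card_poly_roots_bound)
  moreover have "{x. poly ?p x = 0} = {x. x ^ n + a * x = b}" by (auto simp: poly_monom algebra_simps)
  ultimately show ?thesis using dg by simp
qed

lemma card_fibers: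
  assumes "finite X"
  shows "card X = (\<Sum>v\<in>f ` X. card {x\<in>X. f x = v})"
proof -
  have "X = (\<Union>v\<in>f ` X. {x\<in>X. f x = v})" by auto
  hence "card X = card (\<Union>v\<in>f ` X. {x\<in>X. f x = v})" by simp
  also have "\<dots> = (\<Sum>v\<in>f ` X. card {x\<in>X. f x = v})"
    using assms by (intro card_UN_disjoint) auto
  finally show ?thesis .
qed

lemma card_fibers_le:
  assumes "finite X" "\<And>v. v \<in> f ` X \<Longrightarrow> card {x\<in>X. f x = v} \<le> k"
  shows "card X \<le> k * card (f ` X)"
proof -
  have "card X = (\<Sum>v\<in>f ` X. card {x\<in>X. f x = v})" using card_fibers[OF assms(1)] .
  also have "\<dots> \<le> (\<Sum>v\<in>f ` X. k)" using assms(2) by (intro sum_mono) auto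
  finally show ?thesis by (simp add: mult.commute)
qed

lemma three_roots:
  fixes A B C :: "'a::field"
  assumes "A*x1^2 + B*x1 + C = 0" "A*x2^2 + B*x2 + C = 0" "A*x3^2 + B*x3 + C = 0"
    and "x1 \<noteq> x2" "x1 \<noteq> x3" "x2 \<noteq> x3"
  shows "A = 0 \<and> B = 0 \<and> C = 0"
proof -
  have "(x1 - x2) * (A*(x1+x2) + B) = (A*x1^2 + B*x1 + C) - (A*x2^2 + B*x2 + C)"
    by (simp add: algebra_simps power2_eq_square)
  hence "(x1 - x2) * (A*(x1+x2) + B) = 0" using assms(1,2) by simp
  hence e1: "A*(x1+x2) + B = 0" using assms(4) by simp
  have "(x1 - x3) * (A*(x1+x3) + B) = (A*x1^2 + B*x1 + C) - (A*x3^2 + B*x3 + C)"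
    by (simp add: algebra_simps power2_eq_square)
  hence "(x1 - x3) * (A*(x1+x3) + B) = 0" using assms(1,3) by simp
  hence e2: "A*(x1+x3) + B = 0" using assms(5) by simp
  have "A * (x2 - x3) = (A*(x1+x2) + B) - (A*(x1+x3) + B)" by (simp add: algebra_simps)
  hence "A * (x2 - x3) = 0" using e1 e2 by simp
  hence A: "A = 0" using assms(6) by simp
  hence "B = 0" using e1 by simp
  thus ?thesis using A assms(1) by simp
qed

lemma three_elems:
  assumes "finite X" "\<not> card X \<le> 2"
  obtains a b c where "a \<in> X" "b \<in> X" "c \<in> X" "a \<noteq> b" "a \<noteq> c" "b \<noteq> c"
proof -
  obtain a where a: "a \<in> X" using assms by fastforce
  have "\<not> card (X - {a}) \<le> 1" using assms a by (simp add: card_Diff_singleton)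
  then obtain b where b: "b \<in> X - {a}" by (metis card.empty ex_in_conv zero_le)
  have "\<not> card (X - {a} - {b}) \<le> 0" using assms a b by (simp add: card_Diff_singleton)
  then obtain c where c: "c \<in> X - {a} - {b}" by (metis bot_nat_0.extremum card.empty ex_in_conv)
  show ?thesis using a b c that by blast
qed

lemma Qid:
  fixes a b g d a' b' g' d' u c x :: "'a::field"
  shows "(a*x+b)*(g'*u + d'*x) + (a'*u + b'*x)*(g*x+d) - c*(g*x+d)*(g'*u+d'*x)
    = (a*d' + b'*g - c*g*d')*x^2 + (a*g'*u + b*d' + a'*u*g + b'*d - c*(g*g'*u + d*d'))*x
      + (b*g'*u + a'*u*d - c*d*g'*u)"
  by (simp add: algebra_simps power2_eq_square)

lemma idd:
  fixes a c d e f x z s B :: "'a::field"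
  assumes d0: "d \<noteq> 0" and B0: "B \<noteq> 0" and hx: "x = (B - f)/d" and hc: "c = s^2 - a*f^2/d^2 - e*f/d"
  shows "(B*(z + s/B))^2 + B*(B*(z + s/B)) + (a*x^2+e*x+c)
          = B^2*((z^2+z) - ((a/d)*x + (a*f/d^2 + (e/d + s)))/B)
            + 2*(a*B^2/d^2 + B*e/d + B*s + B*z*s - a*B*f/d^2 + a*f^2/d^2 + c)"
  unfolding hx hc using d0 B0 by (simp add: field_simps power2_eq_square)

lemma frac_eq:
  fixes a b c d1 d2 :: "'a::field"
  assumes "d1 \<noteq> 0" "d2 \<noteq> 0"
  shows "a/d1 + b/d2 = c \<longleftrightarrow> a*d2 + b*d1 - c*d1*d2 = 0"
proof -
  have "a/d1 + b/d2 - c = (a*d2 + b*d1 - c*d1*d2) / (d1*d2)" using assms by (simp add: field_simps)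
  thus ?thesis using assms by (metis divide_eq_0_iff eq_iff_diff_eq_0 mult_eq_0_iff)
qed

context
  fixes h :: nat
  assumes two: "(2::'a::{field,finite}) = 0"
begin

lemma addself: "(x::'a) + x = 0"
  by (metis mult_2 mult_zero_left two)

lemma minus_self: "- (x::'a) = x"
  by (metis add_eq_0_iff addself)

lemma frob2: "((x::'a) + y)^2 = x^2 + y^2"
proof -
  have "(x + y)^2 = x^2 + y^2 + 2*(x*y)" by (simp add: power2_eq_square algebra_simps)
  thus ?thesis using two by simp
qed

lemma frobk: "((x::'a) + y)^(2^k) = x^(2^k) + y^(2^k)"
proof (induction k)
  case 0 thus ?case by simp
next
  case (Suc k)
  have "((x::'a) + y)^(2^Suc k) = ((x+y)^(2^k))^2" by (simp add: power_mult[symmetric] mult.commute)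
  also have "\<dots> = (x^(2^k))^2 + (y^(2^k))^2" using Suc frob2 by simp
  finally show ?case by (simp add: power_mult[symmetric] mult.commute)
qed

lemma two_to_one:
  assumes "finite (X::'a set)" "\<And>z. z \<in> X \<Longrightarrow> z + 1 \<in> X"
  shows "card X = 2 * card ((\<lambda>z. z^2 + z) ` X)"
proof -
  let ?f = "\<lambda>z::'a. z^2 + z"
  have fib: "{x\<in>X. ?f x = v} = {z0, z0+1}" if "z0 \<in> X" "v = ?f z0" for z0 v
  proof -
    have "?f x = ?f z0 \<longleftrightarrow> x = z0 \<or> x = z0 + 1" for x
    proof -
      have "?f x - ?f z0 = (x - z0) * (x + z0 + 1)" by (simp add: power2_eq_square algebra_simps)
      moreover have "x + z0 + 1 = 0 \<longleftrightarrow> x = z0 + 1"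
        by (metis add.assoc add.commute add_diff_cancel_left' addself diff_add_cancel)
      ultimately show ?thesis by (metis eq_iff_diff_eq_0 mult_eq_0_iff)
    qed
    thus ?thesis using that assms(2) by auto
  qed
  have "card X = (\<Sum>v\<in>?f ` X. card {x\<in>X. ?f x = v})" using card_fibers[OF assms(1)] .
  also have "\<dots> = (\<Sum>v\<in>?f ` X. 2)"
  proof (rule sum.cong)
    fix v assume "v \<in> ?f ` X"
    then obtain z0 where "z0 \<in> X" "v = ?f z0" by blast
    thus "card {x\<in>X. ?f x = v} = 2" using fib by simp
  qed simp
  finally show ?thesis by simp
qed


context
  fixes q :: nat
  assumes card: "card (UNIV::'a set) = q^2" and qd: "q = 2^h" and h1: "h \<ge> 1"
begin

lemma q2: "q \<ge> 2"
proof -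
  have "(2::nat)^1 \<le> 2^h" using h1 by (intro power_increasing) auto
  thus ?thesis using qd by simp
qed

lemma frobq: "((x::'a) + y)^q = x^q + y^q"
  using frobk qd by simp

lemma fermatq: "(x::'a)^(q^2) = x"
  using fermat[of x] card by simp

lemma fermatq': "((x::'a)^q)^q = x"
  using fermatq by (simp add: power_mult[symmetric] power2_eq_square)

lemma card_K: "card {z::'a. z^q = z} \<le> q"
proof -
  have "{z::'a. z^q = z} = {z. z^q + (-1)*z = 0}" by auto
  thus ?thesis using roots_bound2[OF q2, of "-1::'a" 0] by simp
qed

lemma card_ImF: "2 * card (range (\<lambda>y::'a. y^2 + y)) = q^2"
  using two_to_one[of UNIV] card by simp

lemma ImK_sub: "(\<lambda>z::'a. z^2+z) ` {z. z^q = z} \<subseteq> {z. z^q = z}"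
proof
  fix w assume "w \<in> (\<lambda>z::'a. z^2+z) ` {z. z^q = z}"
  then obtain z where z: "z^q = z" "w = z^2 + z" by auto
  have "(z^2)^q = (z^q)^2" by (metis power_mult mult.commute)
  hence "w^q = (z^q)^2 + z^q" using z frobq by simp
  thus "w \<in> {z. z^q = z}" using z by simp
qed

lemma card_ImK: "2 * card ((\<lambda>z::'a. z^2+z) ` {z. z^q = z}) = card {z::'a. z^q = z}"
proof -
  have "z + 1 \<in> {z::'a. z^q = z}" if "z \<in> {z. z^q = z}" for z
    using that frobq by simp
  thus ?thesis using two_to_one[of "{z::'a. z^q = z}"] by simp
qed

lemma lift:
  assumes "(w::'a) + w^q \<in> (\<lambda>z::'a. z^2+z) ` {z. z^q = z}"
  shows "w \<in> range (\<lambda>y::'a. y^2 + y)"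
proof -
  let ?ImK = "(\<lambda>z::'a. z^2+z) ` {z. z^q = z}"
  let ?A = "{w::'a. w + w^q \<in> ?ImK}"
  have sub: "range (\<lambda>y::'a. y^2 + y) \<subseteq> ?A"
  proof
    fix w assume "w \<in> range (\<lambda>y::'a. y^2 + y)"
    then obtain y where y: "w = y^2 + y" by auto
    let ?z = "y + y^q"
    have zK: "?z^q = ?z" using frobq fermatq' by (simp add: add.commute)
    have "w + w^q = y^2 + y + ((y^q)^2 + y^q)" using y frobq by (simp add: power_mult[symmetric] mult.commute)
    also have "\<dots> = ?z^2 + ?z" using frob2 by (simp add: algebra_simps)
    finally show "w \<in> ?A" using zK by auto
  qed
  have "?A = (\<Union>c\<in>?ImK. {w. w^q + 1*w = c})" by (auto simp: add.commute)
  hence "card ?A \<le> (\<Sum>c\<in>?ImK. card {w::'a. w^q + 1*w = c})"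
    using card_UN_le[of ?ImK "\<lambda>c. {w::'a. w^q + 1*w = c}"] by simp
  also have "\<dots> \<le> (\<Sum>c\<in>?ImK. q)" using roots_bound2[OF q2, of 1] by (intro sum_mono) simp
  also have "\<dots> = q * card ?ImK" by simp
  finally have "2 * card ?A \<le> q * (2 * card ?ImK)" by simp
  also have "\<dots> \<le> q * q" using card_ImK card_K by simp
  finally have "card ?A \<le> card (range (\<lambda>y::'a. y^2 + y))" using card_ImF by (simp add: power2_eq_square)
  hence "?A = range (\<lambda>y::'a. y^2 + y)" using sub by (intro card_seteq[symmetric]) auto
  thus ?thesis using assms by auto
qed
lemma card_S:
  assumes u0: "(u::'a) \<noteq> 0" and uq: "u^q = u"
  shows "q + 1 \<le> card {x::'a. x^(q+1) = u}"
proof -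
  let ?Fs = "UNIV - {0::'a}"
  let ?N = "\<lambda>x::'a. x^(q+1)"
  let ?Ks = "{v::'a. v^q = v} - {0}"
  let ?g = "\<lambda>v. card {x::'a. x^(q+1) = v}"
  have NK: "?N ` ?Fs \<subseteq> ?Ks"
  proof
    fix v assume "v \<in> ?N ` ?Fs"
    then obtain x where x: "x \<noteq> 0" "v = x^(q+1)" by auto
    have "v^q = ((x^q)^q) * x^q" using x by (simp add: power_mult_distrib[symmetric] mult.commute)
    also have "\<dots> = v" using x fermatq' by simp
    finally show "v \<in> ?Ks" using x by simp
  qed
  have uK: "u \<in> ?Ks" using u0 uq by simp
  have "(0::'a) \<in> {v. v^q = v}" using q2 by simp
  hence cKs: "card ?Ks \<le> q - 1" using card_K by (simp add: card_Diff_singleton)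
  have cFs: "card ?Fs = q^2 - 1" using card by (simp add: card_Diff_singleton)
  have "card ?Fs = (\<Sum>v\<in>?N ` ?Fs. card {x\<in>?Fs. ?N x = v})" by (rule card_fibers) simp
  also have "\<dots> \<le> (\<Sum>v\<in>?N ` ?Fs. ?g v)" by (intro sum_mono card_mono) auto
  also have "\<dots> \<le> (\<Sum>v\<in>?Ks. ?g v)" using NK by (intro sum_mono2) auto
  also have "\<dots> = ?g u + (\<Sum>v\<in>?Ks - {u}. ?g v)" using uK by (simp add: sum.remove)
  also have "\<dots> \<le> ?g u + (\<Sum>v\<in>?Ks - {u}. q + 1)"
    using roots_bound1[of "q+1"] by (intro add_left_mono sum_mono) auto
  also have "\<dots> = ?g u + (card ?Ks - 1) * (q + 1)" using uK by (simp add: card_Diff_singleton)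
  also have "\<dots> \<le> ?g u + (q - 2) * (q + 1)" using cKs by (intro add_left_mono mult_right_mono) auto
  finally have ineq: "q^2 - 1 \<le> ?g u + (q - 2) * (q + 1)" using cFs by simp
  obtain r where r: "q = r + 2" using q2 by (metis add.commute le_Suc_ex)
  show ?thesis using ineq unfolding r by (simp add: power2_eq_square algebra_simps)
qed


lemma KL:
  fixes \<alpha> \<beta> \<gamma> \<delta> u :: 'a
  assumes u0: "u \<noteq> 0" and uq: "u^q = u" and nd: "\<alpha>*\<delta> + \<beta>*\<gamma> \<noteq> 0"
  shows "\<exists>x. x^(q+1) = u \<and> (\<gamma>*x+\<delta> = 0 \<or> (\<alpha>*x+\<beta>)/(\<gamma>*x+\<delta>) \<in> range (\<lambda>y. y^2+y))"
proof (rule ccontr)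
  assume H: "\<not> ?thesis"
  let ?S = "{x::'a. x^(q+1) = u}"
  let ?K = "{z::'a. z^q = z}"
  let ?ImK = "(\<lambda>z::'a. z^2+z) ` ?K"
  define m where "m x = (\<alpha>*x+\<beta>)/(\<gamma>*x+\<delta>)" for x
  define v where "v x = m x + (m x)^q" for x
  have Hd: "\<gamma>*x+\<delta> \<noteq> 0" if "x \<in> ?S" for x using H that by auto
  have Hm: "m x \<notin> range (\<lambda>y. y^2+y)" if "x \<in> ?S" for x using H that unfolding m_def by auto
  have vK: "v x \<in> ?K - ?ImK" if "x \<in> ?S" for x
  proof -
    have "(v x)^q = (m x)^q + m x" unfolding v_def using frobq fermatq' by simp
    hence "v x \<in> ?K" unfolding v_def by (simp add: add.commute)
    moreover have "v x \<notin> ?ImK" using lift[of "m x"] Hm[OF that] unfolding v_def by blast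
    ultimately show ?thesis by simp
  qed
  have cKI: "2 * card (?K - ?ImK) \<le> q"
  proof -
    have "card (?K - ?ImK) = card ?K - card ?ImK" using ImK_sub by (simp add: card_Diff_subset)
    thus ?thesis using card_ImK card_K by simp
  qed
  have cS: "q + 1 \<le> card ?S" using card_S[OF u0 uq] .
  have xnz: "x \<noteq> 0" if "x \<in> ?S" for x using that u0 by auto
  have xq: "x^q = u / x" if "x \<in> ?S" for x
    using that xnz[OF that] by (simp add: field_simps mult.commute)
  define N2 where "N2 x = \<alpha>^q*u + \<beta>^q*x" for x
  define D2 where "D2 x = \<gamma>^q*u + \<delta>^q*x" for x
  have mq: "(m x)^q = N2 x / D2 x \<and> D2 x \<noteq> 0" if xS: "x \<in> ?S" for x
  proof -
    have x0: "x \<noteq> 0" using xnz[OF xS] .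
    have n: "(\<alpha>*x+\<beta>)^q = N2 x / x" using frobq xq[OF xS] x0
      by (simp add: power_mult_distrib N2_def field_simps)
    have d: "(\<gamma>*x+\<delta>)^q = D2 x / x" using frobq xq[OF xS] x0
      by (simp add: power_mult_distrib D2_def field_simps)
    have "(\<gamma>*x+\<delta>)^q \<noteq> 0" using Hd[OF xS] by simp
    hence D0: "D2 x \<noteq> 0" using d by simp
    have "(m x)^q = (\<alpha>*x+\<beta>)^q / (\<gamma>*x+\<delta>)^q" unfolding m_def by (simp add: power_divide)
    also have "\<dots> = N2 x / D2 x" using n d x0 by simp
    finally show ?thesis using D0 by simp
  qed
  have injm: "inj_on m ?S"
  proof (rule inj_onI)
    fix x y assume xS: "x \<in> ?S" and yS: "y \<in> ?S" and e: "m x = m y"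
    have "(\<alpha>*x+\<beta>) * (\<gamma>*y+\<delta>) = (\<alpha>*y+\<beta>) * (\<gamma>*x+\<delta>)"
      using e Hd[OF xS] Hd[OF yS] unfolding m_def by (simp add: field_simps)
    moreover have "(\<alpha>*x+\<beta>) * (\<gamma>*y+\<delta>) - (\<alpha>*y+\<beta>) * (\<gamma>*x+\<delta>) = (\<alpha>*\<delta> - \<beta>*\<gamma>) * (x - y)"
      by (simp add: algebra_simps)
    ultimately have "(\<alpha>*\<delta> - \<beta>*\<gamma>) * (x - y) = 0" by simp
    moreover have "\<alpha>*\<delta> - \<beta>*\<gamma> \<noteq> 0" using nd by (metis diff_conv_add_uminus minus_self)
    ultimately show "x = y" by simp
  qed
  have fib: "card {x\<in>?S. v x = c} \<le> 2" for c
  proof (rule ccontr)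
    assume nc: "\<not> card {x\<in>?S. v x = c} \<le> 2"
    have fin: "finite {x\<in>?S. v x = c}" by simp
    obtain x1 x2 x3 where x123: "x1 \<in> {x\<in>?S. v x = c}" "x2 \<in> {x\<in>?S. v x = c}" "x3 \<in> {x\<in>?S. v x = c}"
      "x1 \<noteq> x2" "x1 \<noteq> x3" "x2 \<noteq> x3" using three_elems[OF fin nc] by blast
    define A where "A = \<alpha>*\<delta>^q + \<beta>^q*\<gamma> - c*\<gamma>*\<delta>^q"
    define B where "B = \<alpha>*\<gamma>^q*u + \<beta>*\<delta>^q + \<alpha>^q*u*\<gamma> + \<beta>^q*\<delta> - c*(\<gamma>*\<gamma>^q*u + \<delta>*\<delta>^q)"
    define C0 where "C0 = \<beta>*\<gamma>^q*u + \<alpha>^q*u*\<delta> - c*\<delta>*\<gamma>^q*u"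
    have Qeq: "(\<alpha>*x+\<beta>) * D2 x + N2 x * (\<gamma>*x+\<delta>) - c * (\<gamma>*x+\<delta>) * D2 x = A*x^2 + B*x + C0" for x
      unfolding A_def B_def C0_def N2_def D2_def by (rule Qid)
    have equiv: "v x = c \<longleftrightarrow> A*x^2 + B*x + C0 = 0" if xS: "x \<in> ?S" for x
    proof -
      have "v x = (\<alpha>*x+\<beta>)/(\<gamma>*x+\<delta>) + N2 x / D2 x" unfolding v_def using mq[OF xS] m_def by simp
      hence "v x = c \<longleftrightarrow> (\<alpha>*x+\<beta>) * D2 x + N2 x * (\<gamma>*x+\<delta>) - c * (\<gamma>*x+\<delta>) * D2 x = 0"
        using frac_eq[OF Hd[OF xS], of "D2 x" "\<alpha>*x+\<beta>" "N2 x" c] mq[OF xS] by simp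
      thus ?thesis using Qeq by simp
    qed
    have r1: "A*x1^2 + B*x1 + C0 = 0" using x123(1) equiv[of x1] by simp
    have r2: "A*x2^2 + B*x2 + C0 = 0" using x123(2) equiv[of x2] by simp
    have r3: "A*x3^2 + B*x3 + C0 = 0" using x123(3) equiv[of x3] by simp
    have "A = 0 \<and> B = 0 \<and> C0 = 0" using three_roots[OF r1 r2 r3 x123(4-6)] .
    hence allc: "v x = c" if "x \<in> ?S" for x using equiv[OF that] by simp
    have "m ` ?S \<subseteq> {w. w^q + 1*w = c}" using allc unfolding v_def by (auto simp: add.commute)
    hence "card (m ` ?S) \<le> card {w::'a. w^q + 1*w = c}" by (intro card_mono) auto
    hence "card (m ` ?S) \<le> q" using roots_bound2[OF q2, of 1 c] by linarith
    thus False using card_image[OF injm] cS by simp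
  qed
  have "card ?S \<le> 2 * card (v ` ?S)" by (rule card_fibers_le) (use fib in auto)
  also have "\<dots> \<le> 2 * card (?K - ?ImK)" using vK by (intro mult_left_mono card_mono) auto
  finally show False using cKI cS by simp
qed

lemma sqrt_ex: "\<exists>r::'a. r^2 = z"
proof -
  have ev: "2 * (q div 2) = q" using qd h1 by (cases h) auto
  have "(z^(q * (q div 2)))^2 = z^(q*q)"
    by (metis ev power_mult mult.assoc mult.commute)
  also have "\<dots> = z" using fermatq by (simp add: power2_eq_square)
  finally show ?thesis by blast
qed

lemma S_ne: assumes "(u::'a) \<noteq> 0" "u^q = u" shows "\<exists>x::'a. x^(q+1) = u"
proof -
  have "card {x::'a. x^(q+1) = u} > 0" using card_S[OF assms] by linarith
  hence "{x::'a. x^(q+1) = u} \<noteq> {}" by (metis card.empty less_irrefl)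
  thus ?thesis by blast
qed

lemma core:
  fixes a c d e f u :: 'a
  assumes u0: "u \<noteq> 0" and uq: "u^q = u" and nd: "a*f^2 + e^2 + c*d^2 + d*e*f \<noteq> 0"
  shows "\<exists>x y. x^(q+1) = u \<and> y^2 + (d*x+f)*y + (a*x^2+e*x+c) = 0"
proof -
  have triv: "\<exists>x y. x^(q+1) = u \<and> y^2 + (d*x+f)*y + (a*x^2+e*x+c) = 0"
    if "x^(q+1) = u" "d*x+f = 0" for x
  proof -
    obtain y where "y^2 = a*x^2+e*x+c" using sqrt_ex by blast
    hence "y^2 + (d*x+f)*y + (a*x^2+e*x+c) = (a*x^2+e*x+c) + (a*x^2+e*x+c)" using that by simp
    hence "y^2 + (d*x+f)*y + (a*x^2+e*x+c) = 0" using addself by simp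
    thus ?thesis using that by blast
  qed
  show ?thesis
  proof (cases "d = 0")
    case d0: True
    show ?thesis
    proof (cases "f = 0")
      case True
      obtain x where "x^(q+1) = u" using S_ne[OF u0 uq] by blast
      thus ?thesis using triv[of x] True d0 by simp
    next
      case f0: False
      obtain r where r: "r^2 = a" using sqrt_ex by blast
      define l where "l = (r*f+e)/f^2"
      have "(r*f+e)^2 = a*f^2 + e^2" using frob2 r by (simp add: power_mult_distrib)
      hence "r*f+e \<noteq> 0" using nd d0 by auto
      hence l0: "l*1 + (c/f^2)*0 \<noteq> 0" using f0 unfolding l_def by simp
      obtain x where x: "x^(q+1) = u" and
        alt: "0*x+1 = 0 \<or> (l*x + c/f^2)/(0*x+1) \<in> range (\<lambda>y. y^2+y)"
        using KL[OF u0 uq l0] by blast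
      then obtain z where z: "z^2 + z = l*x + c/f^2" by auto
      have "(f*(z + r*x/f))^2 + f*(f*(z + r*x/f)) + (a*x^2+e*x+c)
          = f^2*((z^2+z) - (l*x + c/f^2)) + 2*(f*r*x*z + a*x^2 + f*r*x + e*x + c)"
        using f0 unfolding l_def r[symmetric] by (simp add: field_simps power2_eq_square)
      hence "(f*(z + r*x/f))^2 + (d*x+f)*(f*(z + r*x/f)) + (a*x^2+e*x+c) = 0"
        using z two d0 by simp
      thus ?thesis using x by blast
    qed
  next
    case d0: False
    show ?thesis
    proof (cases "\<exists>x. x^(q+1) = u \<and> d*x+f = 0")
      case True thus ?thesis using triv by blast
    next
      case nz: False
      define K0 where "K0 = a*f^2/d^2 + e*f/d + c"
      obtain s where s: "s^2 = K0" using sqrt_ex by blast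
      define l where "l = e/d + s"
      have "(e + s*d)^2 = e^2 + K0*d^2" using frob2 s by (simp add: power_mult_distrib)
      also have "\<dots> = a*f^2 + e^2 + c*d^2 + d*e*f" using d0 unfolding K0_def
        by (simp add: field_simps power2_eq_square)
      finally have "e + s*d \<noteq> 0" using nd by auto
      moreover have "l * d = e + s*d" using d0 unfolding l_def by (simp add: field_simps)
      ultimately have "l * d \<noteq> 0" by simp
      moreover have "(a/d)*f + (a*f/d^2 + l)*d = l*d + 2*(a*f/d)" using d0
        by (simp add: field_simps power2_eq_square)
      ultimately have nd': "(a/d)*f + (a*f/d^2 + l)*d \<noteq> 0" using two by simp
      obtain x where x: "x^(q+1) = u" and
        alt: "d*x+f = 0 \<or> ((a/d)*x + (a*f/d^2 + l))/(d*x+f) \<in> range (\<lambda>y. y^2+y)"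
        using KL[OF u0 uq nd'] by blast
      have B0: "d*x+f \<noteq> 0" using nz x by blast
      then obtain z where z: "z^2 + z = ((a/d)*x + (a*f/d^2 + l))/(d*x+f)" using alt by auto
      define B where "B = d*x+f"
      have "(B*(z + s/B))^2 + B*(B*(z + s/B)) + (a*x^2+e*x+c)
          = B^2*((z^2+z) - ((a/d)*x + (a*f/d^2 + l))/B)
            + 2*(a*B^2/d^2 + B*e/d + B*s + B*z*s - a*B*f/d^2 + a*f^2/d^2 + c)"
        unfolding l_def
      proof (rule idd[OF d0])
        show "B \<noteq> 0" using B0 B_def by simp
        show "x = (B - f)/d" using d0 B_def by (simp add: field_simps)
        show "c = s^2 - a*f^2/d^2 - e*f/d" using s K0_def by simp
      qed
      hence "(B*(z + s/B))^2 + (d*x+f)*(B*(z + s/B)) + (a*x^2+e*x+c) = 0"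
        using z two unfolding B_def by simp
      thus ?thesis using x by blast
    qed
  qed
qed
end

end


theorem mainTheorem5:
  fixes h q :: nat and U :: "'a::{field,finite} set"
  assumes "h > 1" and "q = 2 ^ h" and "card (UNIV :: 'a set) = q ^ 2"
    and "U \<noteq> {}" and "U \<subseteq> subfield_star q"
  shows "\<forall>C :: 'a conic. conic_nondeg C \<longrightarrow> (\<exists>p \<in> Psi' q U. on_conic C p)"
proof (intro allI impI)
  fix C :: "'a conic"
  assume ndC: "conic_nondeg C"
  have h1: "h \<ge> 1" using assms(1) by simp
  have cardF: "card (UNIV :: 'a set) = 2 ^ (2*h)" using assms(2,3) by (simp add: power_mult[symmetric] mult.commute)
  have two: "(2::'a) = 0" using char2[OF cardF] h1 by simp
  obtain u where uU: "u \<in> U" using assms(4) by blast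
  hence u0: "u \<noteq> 0" and uq: "u^q = u" using assms(5) unfolding subfield_star_def by auto
  obtain a b c d e f where C: "C = (a, b, c, d, e, f)" by (cases C) auto
  have nd0: "4*a*b*c + d*e*f - a*f^2 - b*e^2 - c*d^2 \<noteq> 0" using ndC C by simp
  have "4*a*b*c + d*e*f - a*f^2 - b*e^2 - c*d^2
      = (a*f^2 + b*e^2 + c*d^2 + d*e*f) + 2*(2*a*b*c - a*f^2 - b*e^2 - c*d^2)"
    by (simp add: algebra_simps)
  also have "\<dots> = a*f^2 + b*e^2 + c*d^2 + d*e*f" using two by simp
  finally have nd: "a*f^2 + b*e^2 + c*d^2 + d*e*f \<noteq> 0" using nd0 by metis
  show "\<exists>p \<in> Psi' q U. on_conic C p"
  proof (cases "b = 0")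
    case True
    have "(0, 1, 0) \<in> Psi' q U" unfolding Psi'_def by simp
    moreover have "on_conic C (0, 1, 0)" unfolding on_conic_def using C True by simp
    ultimately show ?thesis by blast
  next
    case b0: False
    have "(a*b)*f^2 + (e*b)^2 + (c*b)*d^2 + d*(e*b)*f = b * (a*f^2 + b*e^2 + c*d^2 + d*e*f)"
      by (simp add: algebra_simps power2_eq_square)
    hence nd': "(a*b)*f^2 + (e*b)^2 + (c*b)*d^2 + d*(e*b)*f \<noteq> 0" using nd b0 by simp
    obtain x Y where x: "x^(q+1) = u" and Y: "Y^2 + (d*x+f)*Y + ((a*b)*x^2+(e*b)*x+(c*b)) = 0"
      using core[OF two assms(3) assms(2) h1 u0 uq nd'] by blast
    define y where "y = Y / b"
    have "conic_form C (x, y, 1) = (Y^2 + (d*x+f)*Y + ((a*b)*x^2+(e*b)*x+(c*b))) / b"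
      unfolding C y_def using b0 by (simp add: field_simps power2_eq_square)
    hence "conic_form C (x, y, 1) = 0" using Y by simp
    hence "on_conic C (x, y, 1)" unfolding on_conic_def by simp
    moreover have "(x, y, 1) \<in> Psi' q U" unfolding Psi'_def gnorm_def using x uU by auto
    ultimately show ?thesis by blast
  qed
qed

end
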